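(* Let $n\ge3$ and $m,k\ge1$ be integers, let $t,u\in\mathbb{Z}_n$ with $t^2\equiv u\pmod n$, and let $G$ be the set of all $m\times k$ matrices over $\mathbb{Z}_n$ with the operation $[a_{ij}]*[b_{ij}]=[(t a_{ij}+u b_{ij})\bmod n]$. Then $(G,* )$ is a transitively commutative AG-groupoid.
   Context: An AG-groupoid is a set with a binary operation satisfying $(a*b)*c=(c*b)*a$ for all $a,b,c$. An AG-groupoid $G$ is transitively commutative if for all $a,b,c\in G$, $a*b=b*a$ and $b*c=c*b$ imply $a*c=c*a$. *)

theory Defs
  imports Main
begin

definition AG_groupoid :: "'a set \<Rightarrow> ('a \<Rightarrow> 'a \<Rightarrow> 'a) \<Rightarrow> bool" where
  "AG_groupoid G f \<longleftrightarrow>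
     (\<forall>a\<in>G. \<forall>b\<in>G. f a b \<in> G) \<and>
     (\<forall>a\<in>G. \<forall>b\<in>G. \<forall>c\<in>G. f (f a b) c = f (f c b) a)"

definition transitively_commutative :: "'a set \<Rightarrow> ('a \<Rightarrow> 'a \<Rightarrow> 'a) \<Rightarrow> bool" where
  "transitively_commutative G f \<longleftrightarrow>
     (\<forall>a\<in>G. \<forall>b\<in>G. \<forall>c\<in>G. f a b = f b a \<longrightarrow> f b c = f c b \<longrightarrow> f a c = f c a)"

text \<open>m x k matrices over Z_n: functions on indices with entries in {0..<n}
  for i<m, j<k, and value 0 outside the index range (so equality is matrix equality).\<close>
definition zn_matrices :: "int \<Rightarrow> nat \<Rightarrow> nat \<Rightarrow> (nat \<Rightarrow> nat \<Rightarrow> int) set" where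
  "zn_matrices n m k = {A. (\<forall>i j. i < m \<and> j < k \<longrightarrow> A i j \<in> {0..<n}) \<and>
                            (\<forall>i j. \<not> (i < m \<and> j < k) \<longrightarrow> A i j = 0)}"

definition zn_op :: "int \<Rightarrow> nat \<Rightarrow> nat \<Rightarrow> int \<Rightarrow> int \<Rightarrow>
    (nat \<Rightarrow> nat \<Rightarrow> int) \<Rightarrow> (nat \<Rightarrow> nat \<Rightarrow> int) \<Rightarrow> (nat \<Rightarrow> nat \<Rightarrow> int)" where
  "zn_op n m k t u A B = (\<lambda>i j. if i < m \<and> j < k then (t * A i j + u * B i j) mod n else 0)"

end

theory Submission
  imports Defs
begin

lemma ag_entry:
  fixes n t u a b c :: int
  assumes "t ^ 2 mod n = u mod n"
  shows "(t * ((t*a + u*b) mod n) + u*c) mod n = (t * ((t*c + u*b) mod n) + u*a) mod n"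
proof -
  have h: "n dvd t*t - u" using assms by (simp add: mod_eq_dvd_iff power2_eq_square)
  have "(t * ((t*a + u*b) mod n) + u*c) mod n = (t*(t*a+u*b) + u*c) mod n"
    by (metis mod_add_left_eq mod_mult_right_eq)
  moreover have "(t * ((t*c + u*b) mod n) + u*a) mod n = (t*(t*c+u*b) + u*a) mod n"
    by (metis mod_add_left_eq mod_mult_right_eq)
  moreover have "n dvd (t*(t*a+u*b) + u*c) - (t*(t*c+u*b) + u*a)"
  proof -
    have "(t*(t*a+u*b) + u*c) - (t*(t*c+u*b) + u*a) = (t*t - u)*(a - c)"
      by (simp add: algebra_simps)
    thus ?thesis using h by simp
  qed
  hence "(t*(t*a+u*b) + u*c) mod n = (t*(t*c+u*b) + u*a) mod n" by (simp add: mod_eq_dvd_iff)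
  ultimately show ?thesis by metis
qed

lemma tc_entry:
  fixes n t u a b c :: int
  assumes "(t*a + u*b) mod n = (t*b + u*a) mod n"
      and "(t*b + u*c) mod n = (t*c + u*b) mod n"
  shows "(t*a + u*c) mod n = (t*c + u*a) mod n"
proof -
  have 1: "n dvd (t*a + u*b) - (t*b + u*a)" using assms(1) by (simp add: mod_eq_dvd_iff)
  have 2: "n dvd (t*b + u*c) - (t*c + u*b)" using assms(2) by (simp add: mod_eq_dvd_iff)
  have "(t*a + u*c) - (t*c + u*a) = ((t*a + u*b) - (t*b + u*a)) + ((t*b + u*c) - (t*c + u*b))"
    by (simp add: algebra_simps)
  hence "n dvd (t*a + u*c) - (t*c + u*a)" using 1 2 by (metis dvd_add)
  thus ?thesis by (simp add: mod_eq_dvd_iff)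
qed

theorem mainTheorem6:
  fixes n t u :: int and m k :: nat
  assumes "n \<ge> 3" and "m \<ge> 1" and "k \<ge> 1"
    and "t \<in> {0..<n}" and "u \<in> {0..<n}"
    and "t ^ 2 mod n = u mod n"
  shows "AG_groupoid (zn_matrices n m k) (zn_op n m k t u) \<and>
         transitively_commutative (zn_matrices n m k) (zn_op n m k t u)"
proof
  show "AG_groupoid (zn_matrices n m k) (zn_op n m k t u)"
    unfolding AG_groupoid_def
  proof (intro conjI ballI)
    fix a b assume "a \<in> zn_matrices n m k" "b \<in> zn_matrices n m k"
    show "zn_op n m k t u a b \<in> zn_matrices n m k"
      using assms(1) by (auto simp: zn_matrices_def zn_op_def)
  next
    fix a b c
    show "zn_op n m k t u (zn_op n m k t u a b) c = zn_op n m k t u (zn_op n m k t u c b) a"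
      using ag_entry[OF assms(6)] by (auto simp: zn_op_def fun_eq_iff)
  qed
next
  show "transitively_commutative (zn_matrices n m k) (zn_op n m k t u)"
    unfolding transitively_commutative_def
  proof (intro ballI impI)
    fix a b c
    assume h1: "zn_op n m k t u a b = zn_op n m k t u b a"
       and h2: "zn_op n m k t u b c = zn_op n m k t u c b"
    show "zn_op n m k t u a c = zn_op n m k t u c a"
    proof (rule ext, rule ext)
      fix i j
      show "zn_op n m k t u a c i j = zn_op n m k t u c a i j"
      proof (cases "i < m \<and> j < k")
        case True
        have "zn_op n m k t u a b i j = zn_op n m k t u b a i j" using h1 by simp
        hence e1: "(t * a i j + u * b i j) mod n = (t * b i j + u * a i j) mod n"
          using True by (simp add: zn_op_def)
        have "zn_op n m k t u b c i j = zn_op n m k t u c b i j" using h2 by simp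
        hence e2: "(t * b i j + u * c i j) mod n = (t * c i j + u * b i j) mod n"
          using True by (simp add: zn_op_def)
        show ?thesis using tc_entry[OF e1 e2] True by (simp add: zn_op_def)
      next
        case False thus ?thesis unfolding zn_op_def by presburger
      qed
    qed
  qed
qed

end
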